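(* Let $\alpha\in\mathbb{R}\setminus\{0\}$, let $\delta^{\star}(\alpha)=1/\alpha^2$ if $\alpha\le 2$ and $\delta^{\star}(\alpha)=\frac{1}{2\alpha}\exp\{1-\frac{\alpha}{2}\}$ if $\alpha>2$, let $|\delta|\le\delta^{\star}(\alpha)$, and let $C(u,v)=uv+\delta(1-e^{\alpha(u-u^2)})(1-e^{\alpha(v-v^2)})$ on $[0,1]^2$. Define Spearman's rho $\rho_C=12\int_0^1\int_0^1C(u,v)\,du\,dv-3$, Gini's gamma $\gamma_C=4\{\int_0^1C(u,1-u)\,du-\int_0^1(u-C(u,u))\,du\}$, Kendall's tau $\tau_C=4\int_0^1\int_0^1 C(u,v)\,dC(u,v)-1$, Blest's measure $\eta_C=24\int_0^1\int_0^1(1-u)C(u,v)\,du\,dv-2$, and Spearman's footrule $\phi_C=6\int_0^1 C(u,u)\,du-2$. Then $$\eta_C=\rho_C=\tfrac{3}{2}\tau_C\quad\text{and}\quad \phi_C=\tfrac{3}{4}\gamma_C.$$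
   Context: $\int\int C\,dC$ denotes the Lebesgue–Stieltjes integral of $C$ with respect to the probability measure with distribution function $C$ (equivalently $\int\int C(u,v)c(u,v)\,du\,dv$ with $c=\partial^2C/\partial u\partial v$). *)

theory Defs
  imports "HOL-Analysis.Analysis"
begin

definition delta_star :: "real \<Rightarrow> real" where
  "delta_star \<alpha> = (if \<alpha> \<le> 2 then 1 / \<alpha>\<^sup>2 else (1 / (2 * \<alpha>)) * exp (1 - \<alpha> / 2))"

definition copC :: "real \<Rightarrow> real \<Rightarrow> real \<Rightarrow> real \<Rightarrow> real" where
  "copC \<alpha> \<delta> u v = u * v + \<delta> * (1 - exp (\<alpha> * (u - u\<^sup>2))) * (1 - exp (\<alpha> * (v - v\<^sup>2)))"

definition cop_density :: "(real \<Rightarrow> real \<Rightarrow> real) \<Rightarrow> real \<Rightarrow> real \<Rightarrow> real" where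
  "cop_density C u v = deriv (\<lambda>s. deriv (\<lambda>t. C s t) v) u"

definition spearman_rho :: "(real \<Rightarrow> real \<Rightarrow> real) \<Rightarrow> real" where
  "spearman_rho C = 12 * integral (cbox (0,0) (1,1)) (\<lambda>(u,v). C u v) - 3"

definition gini_gamma :: "(real \<Rightarrow> real \<Rightarrow> real) \<Rightarrow> real" where
  "gini_gamma C = 4 * (integral {0..1} (\<lambda>u. C u (1 - u)) - integral {0..1} (\<lambda>u. u - C u u))"

definition kendall_tau :: "(real \<Rightarrow> real \<Rightarrow> real) \<Rightarrow> real" where
  "kendall_tau C = 4 * integral (cbox (0,0) (1,1)) (\<lambda>(u,v). C u v * cop_density C u v) - 1"

definition blest_eta :: "(real \<Rightarrow> real \<Rightarrow> real) \<Rightarrow> real" where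
  "blest_eta C = 24 * integral (cbox (0,0) (1,1)) (\<lambda>(u,v). (1 - u) * C u v) - 2"

definition footrule_phi :: "(real \<Rightarrow> real \<Rightarrow> real) \<Rightarrow> real" where
  "footrule_phi C = 6 * integral {0..1} (\<lambda>u. C u u) - 2"

end

theory Submission
  imports Defs
begin

definition ff :: "real \<Rightarrow> real \<Rightarrow> real" where
  "ff a u = 1 - exp (a * (u - u\<^sup>2))"

definition fd :: "real \<Rightarrow> real \<Rightarrow> real" where
  "fd a u = - (exp (a * (u - u\<^sup>2)) * (a * (1 - 2 * u)))"

lemma ff_deriv: "(ff a has_real_derivative fd a u) (at u)"
  unfolding ff_def fd_def
  by (auto intro!: derivative_eq_intros simp: power2_eq_square algebra_simps)

lemma ff_deriv_w: "(ff a has_real_derivative fd a u) (at u within S)"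
  by (rule has_field_derivative_at_within[OF ff_deriv])

lemma ff_cont: "continuous_on S (ff a)"
  unfolding ff_def by (intro continuous_intros)

lemma fd_cont: "continuous_on S (fd a)"
  unfolding fd_def by (intro continuous_intros)

lemma ff_sym: "ff a (1 - u) = ff a u"
  unfolding ff_def by (simp add: power2_eq_square algebra_simps)

lemma copC_ff: "copC a d u v = u * v + d * ff a u * ff a v"
  unfolding copC_def ff_def by simp

lemma density: "cop_density (copC a d) u v = 1 + d * fd a u * fd a v"
proof -
  have inner: "deriv (\<lambda>t. copC a d s t) v = s + d * ff a s * fd a v" for s
  proof (rule DERIV_imp_deriv)
    show "((\<lambda>t. copC a d s t) has_real_derivative s + d * ff a s * fd a v) (at v)"
      unfolding copC_ff
      by (auto intro!: derivative_eq_intros ff_deriv)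
  qed
  have "cop_density (copC a d) u v = deriv (\<lambda>s. s + d * ff a s * fd a v) u"
    unfolding cop_density_def inner ..
  also have "\<dots> = 1 + d * fd a u * fd a v"
    by (rule DERIV_imp_deriv) (auto intro!: derivative_eq_intros ff_deriv)
  finally show ?thesis .
qed

lemma sep_int:
  fixes g h :: "real \<Rightarrow> real"
  assumes "continuous_on UNIV g" "continuous_on UNIV h"
  shows "integral (cbox (0,0) (1,1)) (\<lambda>(u,v). g u * h v) = integral {0..1} g * integral {0..1} h"
proof -
  have c: "continuous_on (cbox (0,0) (1,1)) (\<lambda>(u::real,v::real). g u * h v)"
    using assms
    by (auto intro!: continuous_intros continuous_on_compose2[OF assms(1)] continuous_on_compose2[OF assms(2)]
        simp: case_prod_unfold)
  have "integral (cbox (0,0) (1,1)) (\<lambda>(u,v). g u * h v)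
      = integral (cbox 0 1) (\<lambda>x. integral (cbox 0 1) (\<lambda>y. g x * h y))"
    using integral_prod_continuous[OF c] by simp
  also have "\<dots> = integral {0..1} (\<lambda>x. g x * integral {0..1} h)"
    by simp
  also have "\<dots> = integral {0..1} g * integral {0..1} h"
    by simp
  finally show ?thesis .
qed


lemma sep_has:
  fixes g h :: "real \<Rightarrow> real"
  assumes "continuous_on UNIV g" "continuous_on UNIV h"
  shows "((\<lambda>(u,v). g u * h v) has_integral (integral {0..1} g * integral {0..1} h)) (cbox (0,0) (1,1))"
proof -
  have c: "continuous_on (cbox (0,0) (1,1)) (\<lambda>(u::real,v::real). g u * h v)"
    using assms
    by (auto intro!: continuous_intros continuous_on_compose2[OF assms(1)] continuous_on_compose2[OF assms(2)]
        simp: case_prod_unfold)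
  show ?thesis using sep_int[OF assms] integrable_continuous[OF c]
    by (metis integrable_integral)
qed

lemma int1: "((\<lambda>u::real. u) has_integral 1/2) {0..1}"
proof -
  have "((\<lambda>u::real. u) has_integral ((\<lambda>u. u^2/2) 1 - (\<lambda>u. u^2/2) 0)) {0..1}"
    by (rule fundamental_theorem_of_calculus)
       (auto intro!: derivative_eq_intros simp: has_real_derivative_iff_has_vector_derivative[symmetric])
  then show ?thesis by simp
qed

lemma int2: "((\<lambda>u::real. u * u) has_integral 1/3) {0..1}"
proof -
  have "((\<lambda>u::real. u * u) has_integral ((\<lambda>u. u^3/3) 1 - (\<lambda>u. u^3/3) 0)) {0..1}"
    by (rule fundamental_theorem_of_calculus)
       (auto intro!: derivative_eq_intros simp: has_real_derivative_iff_has_vector_derivative[symmetric] power2_eq_square)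
  then show ?thesis by simp
qed

lemma ff0: "ff a 0 = 0" and ff1: "ff a 1 = 0" by (simp_all add: ff_def)

lemma int_ufd: "((\<lambda>u. u * fd a u) has_integral - integral {0..1} (ff a)) {0..1}"
proof -
  have "((\<lambda>u. ff a u + u * fd a u) has_integral ((\<lambda>u. u * ff a u) 1 - (\<lambda>u. u * ff a u) 0)) {0..1}"
    by (rule fundamental_theorem_of_calculus)
       (auto intro!: derivative_eq_intros ff_deriv_w simp: has_real_derivative_iff_has_vector_derivative[symmetric])
  then have h: "((\<lambda>u. ff a u + u * fd a u) has_integral 0) {0..1}" by (simp add: ff0 ff1)
  have i: "(ff a has_integral integral {0..1} (ff a)) {0..1}"
    by (intro integrable_integral integrable_continuous_real ff_cont)
  from has_integral_diff[OF h i] show ?thesis by simp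
qed

lemma int_ffd: "((\<lambda>u. ff a u * fd a u) has_integral 0) {0..1}"
proof -
  have "((\<lambda>u. ff a u * fd a u) has_integral ((\<lambda>u. (ff a u)^2/2) 1 - (\<lambda>u. (ff a u)^2/2) 0)) {0..1}"
    by (rule fundamental_theorem_of_calculus)
       (auto intro!: derivative_eq_intros ff_deriv_w simp: has_real_derivative_iff_has_vector_derivative[symmetric])
  then show ?thesis by (simp add: ff0 ff1)
qed

lemma int_uff: "((\<lambda>u. u * ff a u) has_integral integral {0..1} (ff a) / 2) {0..1}"
proof -
  define K where "K = integral {0..1} (\<lambda>u. u * ff a u)"
  have k: "((\<lambda>u. u * ff a u) has_integral K) (cbox 0 1)"
    unfolding K_def cbox_interval
    by (intro integrable_integral integrable_continuous_real continuous_intros ff_cont)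
  have img: "(\<lambda>x::real. (1 / -1) *\<^sub>R x + - ((1 / -1) *\<^sub>R 1)) ` cbox 0 1 = {0..1}"
  proof -
    have "(\<lambda>x::real. 1 - x) ` {0..1} = {0..1}"
      by (auto simp: image_iff intro!: bexI[where x="1 - _"])
    then show ?thesis by (simp add: algebra_simps)
  qed
  have "((\<lambda>x. ((-1) *\<^sub>R x + 1) * ff a ((-1) *\<^sub>R x + 1)) has_integral (1 / (\<bar>-1\<bar> ^ DIM(real))) *\<^sub>R K)
     ((\<lambda>x::real. (1 / -1) *\<^sub>R x + - ((1 / -1) *\<^sub>R 1)) ` cbox 0 1)"
    by (rule has_integral_affinity[OF k]) simp
  then have r: "((\<lambda>x. (1 - x) * ff a x) has_integral K) {0..1}"
    unfolding img using ff_sym[of a] by (simp add: algebra_simps)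
  have i: "(ff a has_integral integral {0..1} (ff a)) {0..1}"
    by (intro integrable_integral integrable_continuous_real ff_cont)
  have "((\<lambda>x. (1 - x) * ff a x + x * ff a x) has_integral K + K) {0..1}"
    using has_integral_add[OF r k[unfolded cbox_interval]] by simp
  then have "((ff a) has_integral K + K) {0..1}" by (simp add: algebra_simps)
  then have "K + K = integral {0..1} (ff a)" using i by (metis has_integral_unique)
  then show ?thesis using k[unfolded cbox_interval] by (metis add_divide_distrib field_sum_of_halves)
qed


lemma hi: "continuous_on UNIV g \<Longrightarrow> ((g::real\<Rightarrow>real) has_integral integral {0..1} g) {0..1}"
  by (intro integrable_integral integrable_continuous_real) (auto intro: continuous_on_subset)

theorem mainTheorem3:
  fixes \<alpha> \<delta> :: real
  assumes "\<alpha> \<noteq> 0"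
    and "\<bar>\<delta>\<bar> \<le> delta_star \<alpha>"
  shows "blest_eta (copC \<alpha> \<delta>) = spearman_rho (copC \<alpha> \<delta>)
       \<and> spearman_rho (copC \<alpha> \<delta>) = 3 / 2 * kendall_tau (copC \<alpha> \<delta>)
       \<and> footrule_phi (copC \<alpha> \<delta>) = 3 / 4 * gini_gamma (copC \<alpha> \<delta>)"
proof -
  define I where "I = integral {0..1} (ff \<alpha>)"
  define J where "J = integral {0..1} (\<lambda>u. ff \<alpha> u * ff \<alpha> u)"
  have cf: "continuous_on UNIV (ff \<alpha>)" "continuous_on UNIV (fd \<alpha>)" by (rule ff_cont, rule fd_cont)
  note ci = continuous_intros cf
  have hI: "(ff \<alpha> has_integral I) {0..1}" unfolding I_def by (rule hi[OF cf(1)])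
  have hJ: "((\<lambda>u. ff \<alpha> u * ff \<alpha> u) has_integral J) {0..1}" unfolding J_def
    by (rule hi) (intro ci)
  have iI: "integral {0..1} (ff \<alpha>) = I" using hI by (rule integral_unique)
  have iu: "integral {0..1} (\<lambda>u::real. u) = 1/2" using int1 by (rule integral_unique)
  have iuu: "integral {0..1} (\<lambda>u::real. u * u) = 1/3" using int2 by (rule integral_unique)
  have iuf: "integral {0..1} (\<lambda>u. u * ff \<alpha> u) = I/2" using int_uff[of \<alpha>] unfolding I_def[symmetric]
    by (rule integral_unique)
  have iufd: "integral {0..1} (\<lambda>u. u * fd \<alpha> u) = - I" using int_ufd[of \<alpha>] unfolding I_def[symmetric]
    by (rule integral_unique)
  have iffd: "integral {0..1} (\<lambda>u. ff \<alpha> u * fd \<alpha> u) = 0" using int_ffd[of \<alpha>]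
    by (rule integral_unique)
  have "((\<lambda>(u,v). u * v + (\<delta> * ff \<alpha> u) * ff \<alpha> v) has_integral
      (integral {0..1} (\<lambda>u::real. u) * integral {0..1} (\<lambda>u::real. u)
       + integral {0..1} (\<lambda>u. \<delta> * ff \<alpha> u) * integral {0..1} (ff \<alpha>))) (cbox (0,0) (1,1))"
    using has_integral_add[OF sep_has[of "\<lambda>u. u" "\<lambda>u. u"] sep_has[of "\<lambda>u. \<delta> * ff \<alpha> u" "ff \<alpha>"]]
    by (simp add: case_prod_unfold ci)
  moreover have "(\<lambda>(u,v). u * v + (\<delta> * ff \<alpha> u) * ff \<alpha> v) = (\<lambda>(u,v). copC \<alpha> \<delta> u v)"
    by (auto simp: copC_ff fun_eq_iff)
  ultimately have S: "spearman_rho (copC \<alpha> \<delta>) = 12 * \<delta> * I^2"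
    unfolding spearman_rho_def using iu iI
    by (simp add: integral_unique power2_eq_square algebra_simps)
  have i1: "integral {0..1} (\<lambda>u::real. (1 - u) * u) = 1/6"
  proof -
    have "((\<lambda>u::real. u - u * u) has_integral 1/2 - 1/3) {0..1}"
      by (rule has_integral_diff[OF int1 int2])
    then show ?thesis by (simp add: algebra_simps integral_unique)
  qed
  have i2: "integral {0..1} (\<lambda>u. \<delta> * (1 - u) * ff \<alpha> u) = \<delta> * (I/2)"
  proof -
    have "((\<lambda>u. \<delta> * (ff \<alpha> u - u * ff \<alpha> u)) has_integral \<delta> * (I - I/2)) {0..1}"
      by (intro has_integral_mult_right has_integral_diff hI int_uff[of \<alpha>, folded I_def])
    then show ?thesis by (simp add: algebra_simps integral_unique)
  qed
  have "((\<lambda>(u,v). ((1 - u) * u) * v + (\<delta> * (1 - u) * ff \<alpha> u) * ff \<alpha> v) has_integral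
      (integral {0..1} (\<lambda>u::real. (1 - u) * u) * integral {0..1} (\<lambda>u::real. u)
       + integral {0..1} (\<lambda>u. \<delta> * (1 - u) * ff \<alpha> u) * integral {0..1} (ff \<alpha>))) (cbox (0,0) (1,1))"
    using has_integral_add[OF sep_has[of "\<lambda>u. (1 - u) * u" "\<lambda>u. u"] sep_has[of "\<lambda>u. \<delta> * (1 - u) * ff \<alpha> u" "ff \<alpha>"]]
    by (simp add: case_prod_unfold ci)
  moreover have "(\<lambda>(u,v). ((1 - u) * u) * v + (\<delta> * (1 - u) * ff \<alpha> u) * ff \<alpha> v) = (\<lambda>(u,v). (1 - u) * copC \<alpha> \<delta> u v)"
    by (auto simp: copC_ff fun_eq_iff algebra_simps)
  ultimately have "((\<lambda>(u,v). (1 - u) * copC \<alpha> \<delta> u v) has_integral (1/6 * (1/2) + \<delta> * (I/2) * I)) (cbox (0,0) (1,1))"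
    unfolding iu iI i1 i2 by simp
  then have B: "blest_eta (copC \<alpha> \<delta>) = 12 * \<delta> * I^2"
    unfolding blest_eta_def
    by (simp add: integral_unique power2_eq_square algebra_simps)
  have k1: "integral {0..1} (\<lambda>u. \<delta> * (u * fd \<alpha> u)) = \<delta> * (-I)"
    using iufd by simp
  have k2: "integral {0..1} (\<lambda>u. \<delta> * ff \<alpha> u) = \<delta> * I"
    using iI by simp
  have k3: "integral {0..1} (\<lambda>u. \<delta>^2 * (ff \<alpha> u * fd \<alpha> u)) = 0"
    using iffd by simp
  have "((\<lambda>(u,v). (u * v + (\<delta> * (u * fd \<alpha> u)) * (v * fd \<alpha> v))
       + ((\<delta> * ff \<alpha> u) * ff \<alpha> v + (\<delta>^2 * (ff \<alpha> u * fd \<alpha> u)) * (ff \<alpha> v * fd \<alpha> v))) has_integral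
      ((integral {0..1} (\<lambda>u::real. u) * integral {0..1} (\<lambda>u::real. u)
       + integral {0..1} (\<lambda>u. \<delta> * (u * fd \<alpha> u)) * integral {0..1} (\<lambda>u. u * fd \<alpha> u))
       + (integral {0..1} (\<lambda>u. \<delta> * ff \<alpha> u) * integral {0..1} (ff \<alpha>)
       + integral {0..1} (\<lambda>u. \<delta>^2 * (ff \<alpha> u * fd \<alpha> u)) * integral {0..1} (\<lambda>u. ff \<alpha> u * fd \<alpha> u))))
     (cbox (0,0) (1,1))"
    using has_integral_add[OF has_integral_add[OF sep_has[of "\<lambda>u. u" "\<lambda>u. u"]
          sep_has[of "\<lambda>u. \<delta> * (u * fd \<alpha> u)" "\<lambda>u. u * fd \<alpha> u"]]
          has_integral_add[OF sep_has[of "\<lambda>u. \<delta> * ff \<alpha> u" "ff \<alpha>"]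
          sep_has[of "\<lambda>u. \<delta>^2 * (ff \<alpha> u * fd \<alpha> u)" "\<lambda>u. ff \<alpha> u * fd \<alpha> u"]]]
    by (simp add: case_prod_unfold ci)
  moreover have "(\<lambda>(u,v). (u * v + (\<delta> * (u * fd \<alpha> u)) * (v * fd \<alpha> v))
       + ((\<delta> * ff \<alpha> u) * ff \<alpha> v + (\<delta>^2 * (ff \<alpha> u * fd \<alpha> u)) * (ff \<alpha> v * fd \<alpha> v)))
      = (\<lambda>(u,v). copC \<alpha> \<delta> u v * cop_density (copC \<alpha> \<delta>) u v)"
    by (auto simp: copC_ff density fun_eq_iff algebra_simps power2_eq_square)
  ultimately have K: "kendall_tau (copC \<alpha> \<delta>) = 8 * \<delta> * I^2"
    unfolding kendall_tau_def using iu iI k1 k2 k3 iufd iffd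
    by (simp add: integral_unique power2_eq_square algebra_simps)
  have f1: "((\<lambda>u. copC \<alpha> \<delta> u u) has_integral 1/3 + \<delta> * J) {0..1}"
    using has_integral_add[OF int2 has_integral_mult_right[OF hJ, of \<delta>]]
    by (simp add: copC_ff algebra_simps)
  have f2: "((\<lambda>u. copC \<alpha> \<delta> u (1 - u)) has_integral (1/2 - 1/3) + \<delta> * J) {0..1}"
    using has_integral_add[OF has_integral_diff[OF int1 int2] has_integral_mult_right[OF hJ, of \<delta>]]
    by (simp add: copC_ff ff_sym algebra_simps)
  have f3: "((\<lambda>u. u - copC \<alpha> \<delta> u u) has_integral 1/2 - (1/3 + \<delta> * J)) {0..1}"
    by (rule has_integral_diff[OF int1 f1])
  have F: "footrule_phi (copC \<alpha> \<delta>) = 6 * \<delta> * J"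
    unfolding footrule_phi_def using integral_unique[OF f1] by simp
  have G: "gini_gamma (copC \<alpha> \<delta>) = 8 * \<delta> * J"
    unfolding gini_gamma_def using integral_unique[OF f2] integral_unique[OF f3] by simp
  show ?thesis using S B K F G by simp
qed

end
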